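(* Let $\mathcal X,\mathcal Y,\mathcal Z$ be discrete alphabets. Let $\{p_\theta\}_{\theta\in\Theta}$ be a nonempty family of probability distributions on $\mathcal X$, $\{P_\lambda(y|x)\}_{\lambda\in\Lambda}$ a nonempty family of transition probability matrices from $\mathcal X$ to $\mathcal Y$, and $\{Q_\mu(z|y)\}_{\mu\in M}$ a nonempty family of transition probability matrices from $\mathcal Y$ to $\mathcal Z$ (a nonlinear Markov chain $X\to Y\to Z$). Then $$\overline I(X;Z)\le\min\big(\overline I(X;Y),\overline I(Y;Z)\big).$$
   Context: For a distribution $p$ on an alphabet $\mathcal U$ and a transition matrix $W(v|u)$, let $I(p,W)=\sum_{u,v}p(u)W(v|u)\log\frac{W(v|u)}{\sum_{u'}p(u')W(v|u')}$ (classical mutual information, with $0\log(\cdot)=0$). Induced objects: the distribution of $Y$, $q_{\theta,\lambda}(y)=\sum_x p_\theta(x)P_\lambda(y|x)$, and the transition matrix of $Z$ given $X$, $R_{\lambda,\mu}(z|x)=\sum_y P_\lambda(y|x)Q_\mu(z|y)$. Nonlinear mutual information: $\overline I(X;Y)=\sup_{\theta,\lambda}I(p_\theta,P_\lambda)$, $\overline I(Y;Z)=\sup_{\theta,\lambda,\mu}I(q_{\theta,\lambda},Q_\mu)$, $\overline I(X;Z)=\sup_{\theta,\lambda,\mu}I(p_\theta,R_{\lambda,\mu})$. *)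

theory Defs
  imports "HOL-Analysis.Analysis"
begin

definition is_dist :: "('u::finite \<Rightarrow> real) \<Rightarrow> bool" where
  "is_dist p \<longleftrightarrow> (\<forall>u. 0 \<le> p u) \<and> (\<Sum>u\<in>UNIV. p u) = 1"

text \<open>A transition probability matrix; W u v stands for W(v|u).\<close>
definition is_channel :: "('u::finite \<Rightarrow> 'v::finite \<Rightarrow> real) \<Rightarrow> bool" where
  "is_channel W \<longleftrightarrow> (\<forall>u. is_dist (W u))"

definition out_dist :: "('u::finite \<Rightarrow> real) \<Rightarrow> ('u \<Rightarrow> 'v \<Rightarrow> real) \<Rightarrow> 'v \<Rightarrow> real" where
  "out_dist p W v = (\<Sum>u\<in>UNIV. p u * W u v)"

definition comp_channel :: "('x \<Rightarrow> 'y::finite \<Rightarrow> real) \<Rightarrow> ('y \<Rightarrow> 'z \<Rightarrow> real) \<Rightarrow> 'x \<Rightarrow> 'z \<Rightarrow> real" where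
  "comp_channel P Q x z = (\<Sum>y\<in>UNIV. P x y * Q y z)"

definition mutual_info :: "('u::finite \<Rightarrow> real) \<Rightarrow> ('u \<Rightarrow> 'v::finite \<Rightarrow> real) \<Rightarrow> real" where
  "mutual_info p W =
     (\<Sum>u\<in>UNIV. \<Sum>v\<in>UNIV.
        if p u * W u v = 0 then 0
        else p u * W u v * ln (W u v / out_dist p W v))"

end

theory Submission
  imports Defs
begin

lemma ln_ineq_aux:
  fixes a b A B :: real
  assumes "a > 0" "b > 0" "A > 0" "B > 0"
  shows "a * ln (a / b) \<ge> a * ln (A / B) + a - b * A / B"
proof -
  have x: "(a * B) / (b * A) > 0" using assms by simp
  have "ln (b * A / (a * B)) \<le> b * A / (a * B) - 1"
    using ln_le_minus_one assms by simp
  moreover have "ln (b * A / (a * B)) = ln b + ln A - ln a - ln B"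
    using assms by (simp add: ln_div ln_mult)
  moreover have "ln (a / b) = ln a - ln b" "ln (A / B) = ln A - ln B"
    using assms by (simp_all add: ln_div)
  ultimately have "ln (a / b) - ln (A / B) \<ge> 1 - b * A / (a * B)" by linarith
  hence "a * (ln (a / b) - ln (A / B)) \<ge> a * (1 - b * A / (a * B))"
    using assms by (simp add: mult_left_mono)
  moreover have "a * (1 - b * A / (a * B)) = a - b * A / B" using assms by (simp add: field_simps)
  ultimately show ?thesis by (simp add: algebra_simps)
qed

lemma logsum:
  fixes a b :: "'i \<Rightarrow> real"
  assumes S: "finite S" and a0: "\<forall>i\<in>S. 0 \<le> a i" and b0: "\<forall>i\<in>S. 0 \<le> b i"
    and ab: "\<forall>i\<in>S. a i > 0 \<longrightarrow> b i > 0"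
  shows "sum a S * ln (sum a S / sum b S) \<le> (\<Sum>i\<in>S. a i * ln (a i / b i))"
proof (cases "sum a S = 0")
  case True
  hence "\<forall>i\<in>S. a i = 0" using sum_nonneg_eq_0_iff[OF S] a0 by blast
  thus ?thesis using True by simp
next
  case False
  define A where "A = sum a S"
  define B where "B = sum b S"
  have A0: "A > 0" using False a0 sum_nonneg[of S a] unfolding A_def by force
  obtain j where j: "j \<in> S" "a j > 0"
    using False a0 by (metis order_le_less sum.neutral)
  have "b j \<le> B" unfolding B_def using member_le_sum[OF j(1)] b0 S by blast
  hence B0: "B > 0" using ab j by force
  have pw: "\<forall>i\<in>S. a i * ln (a i / b i) \<ge> a i * ln (A / B) + a i - b i * A / B"
  proof
    fix i assume i: "i \<in> S"
    show "a i * ln (a i / b i) \<ge> a i * ln (A / B) + a i - b i * A / B"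
    proof (cases "a i = 0")
      case True thus ?thesis using b0 i A0 B0 by simp
    next
      case False
      hence "a i > 0" using a0 i by force
      thus ?thesis using ln_ineq_aux[of "a i" "b i" A B] ab i A0 B0 by blast
    qed
  qed
  have "(\<Sum>i\<in>S. a i * ln (a i / b i)) \<ge> (\<Sum>i\<in>S. a i * ln (A / B) + a i - b i * A / B)"
    using pw by (intro sum_mono) auto
  also have "(\<Sum>i\<in>S. a i * ln (A / B) + a i - b i * A / B) = A * ln (A / B) + A - B * A / B"
    unfolding A_def B_def by (simp add: sum.distrib sum_subtractf sum_distrib_right sum_divide_distrib)
  also have "\<dots> = A * ln (A / B)" using B0 by simp
  finally show ?thesis unfolding A_def B_def by simp
qed

lemma mi_alt: "mutual_info p W = (\<Sum>u\<in>UNIV. \<Sum>v\<in>UNIV. p u * W u v * ln (W u v / out_dist p W v))"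
  unfolding mutual_info_def by (intro sum.cong refl) auto

lemma out_comp: "out_dist p (comp_channel P Q) z = out_dist (out_dist p P) Q z"
proof -
  have "out_dist p (comp_channel P Q) z = (\<Sum>u\<in>UNIV. \<Sum>y\<in>UNIV. p u * P u y * Q y z)"
    unfolding out_dist_def comp_channel_def by (simp add: sum_distrib_left mult.assoc)
  also have "\<dots> = (\<Sum>y\<in>UNIV. \<Sum>u\<in>UNIV. p u * P u y * Q y z)" by (rule sum.swap)
  also have "\<dots> = out_dist (out_dist p P) Q z"
    unfolding out_dist_def by (simp add: sum_distrib_right)
  finally show ?thesis .
qed

lemma out_nonneg: "is_dist p \<Longrightarrow> is_channel P \<Longrightarrow> out_dist p P y \<ge> 0"
  unfolding out_dist_def is_channel_def is_dist_def by (simp add: sum_nonneg)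

lemma dpi1:
  fixes p :: "'x::finite \<Rightarrow> real" and P :: "'x \<Rightarrow> 'y::finite \<Rightarrow> real" and Q :: "'y \<Rightarrow> 'z::finite \<Rightarrow> real"
  assumes dp: "is_dist p" and cP: "is_channel P" and cQ: "is_channel Q"
  shows "mutual_info p (comp_channel P Q) \<le> mutual_info p P"
proof -
  define R where "R = comp_channel P Q"
  define q where "q = out_dist p P"
  define r where "r = out_dist p R"
  have p0: "\<And>x. p x \<ge> 0" using dp unfolding is_dist_def by simp
  have P0: "\<And>x y. P x y \<ge> 0" using cP unfolding is_channel_def is_dist_def by simp
  have Q0: "\<And>y z. Q y z \<ge> 0" using cQ unfolding is_channel_def is_dist_def by simp
  have Q1: "\<And>y. (\<Sum>z\<in>UNIV. Q y z) = 1" using cQ unfolding is_channel_def is_dist_def by simp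
  have rq: "\<And>z. r z = (\<Sum>y\<in>UNIV. q y * Q y z)"
    unfolding r_def R_def q_def out_comp by (simp add: out_dist_def)
  have pw: "p x * R x z * ln (R x z / r z) \<le> (\<Sum>y\<in>UNIV. p x * P x y * Q y z * ln (P x y / q y))" for x z
  proof -
    define a where "a y = p x * P x y * Q y z" for y
    define b where "b y = p x * q y * Q y z" for y
    have q0: "\<And>y. q y \<ge> 0" unfolding q_def using out_nonneg dp cP by blast
    have suma: "sum a UNIV = p x * R x z"
      unfolding a_def R_def comp_channel_def by (simp add: sum_distrib_left mult.assoc)
    have sumb: "sum b UNIV = p x * r z"
      unfolding b_def rq by (simp add: sum_distrib_left mult.assoc)
    have qpos: "q y \<ge> p x * P x y" for y
      unfolding q_def out_dist_def
      using member_le_sum[of x UNIV "\<lambda>u. p u * P u y"] p0 P0 by simp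
    have ab: "\<forall>y\<in>UNIV. a y > 0 \<longrightarrow> b y > 0"
    proof (intro ballI impI)
      fix y assume "a y > 0"
      hence "p x \<noteq> 0" "P x y \<noteq> 0" "Q y z \<noteq> 0" unfolding a_def by auto
      hence "p x > 0" "P x y > 0" "Q y z > 0" using p0[of x] P0[of x y] Q0[of y z] by linarith+
      moreover hence "q y > 0" using qpos[of y] by (smt (verit) mult_pos_pos)
      ultimately show "b y > 0" unfolding b_def by simp
    qed
    have ls: "sum a UNIV * ln (sum a UNIV / sum b UNIV) \<le> (\<Sum>y\<in>UNIV. a y * ln (a y / b y))"
    proof -
      have a0: "\<forall>i\<in>UNIV. 0 \<le> a i" unfolding a_def using p0 P0 Q0 by simp
      have b0: "\<forall>i\<in>UNIV. 0 \<le> b i" unfolding b_def using p0 q0 Q0 by simp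
      show ?thesis by (rule logsum[OF finite a0 b0 ab])
    qed
    have lhs: "sum a UNIV * ln (sum a UNIV / sum b UNIV) = p x * R x z * ln (R x z / r z)"
      unfolding suma sumb by (cases "p x = 0") simp_all
    have rhs: "a y * ln (a y / b y) = p x * P x y * Q y z * ln (P x y / q y)" for y
    proof (cases "a y = 0")
      case True thus ?thesis unfolding a_def by simp
    next
      case False
      hence "p x \<noteq> 0" "Q y z \<noteq> 0" unfolding a_def by auto
      hence "a y / b y = P x y / q y" unfolding a_def b_def by (simp add: field_simps)
      thus ?thesis unfolding a_def by simp
    qed
    show ?thesis using ls lhs rhs by simp
  qed
  have "mutual_info p R = (\<Sum>x\<in>UNIV. \<Sum>z\<in>UNIV. p x * R x z * ln (R x z / r z))"
    unfolding mi_alt r_def ..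
  also have "\<dots> \<le> (\<Sum>x\<in>UNIV. \<Sum>z\<in>UNIV. \<Sum>y\<in>UNIV. p x * P x y * Q y z * ln (P x y / q y))"
    by (intro sum_mono pw)
  also have "\<dots> = (\<Sum>x\<in>UNIV. \<Sum>y\<in>UNIV. \<Sum>z\<in>UNIV. p x * P x y * Q y z * ln (P x y / q y))"
    by (intro sum.cong refl) (rule sum.swap)
  also have "\<dots> = (\<Sum>x\<in>UNIV. \<Sum>y\<in>UNIV. p x * P x y * ln (P x y / q y) * (\<Sum>z\<in>UNIV. Q y z))"
    by (intro sum.cong refl) (subst sum_distrib_left, simp add: mult_ac)
  also have "\<dots> = mutual_info p P"
    unfolding mi_alt q_def Q1 by simp
  finally show ?thesis unfolding R_def .
qed

lemma dpi2:
  fixes p :: "'x::finite \<Rightarrow> real" and P :: "'x \<Rightarrow> 'y::finite \<Rightarrow> real" and Q :: "'y \<Rightarrow> 'z::finite \<Rightarrow> real"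
  assumes dp: "is_dist p" and cP: "is_channel P" and cQ: "is_channel Q"
  shows "mutual_info p (comp_channel P Q) \<le> mutual_info (out_dist p P) Q"
proof -
  define R where "R = comp_channel P Q"
  define q where "q = out_dist p P"
  define r where "r = out_dist p R"
  have p0: "\<And>x. p x \<ge> 0" using dp unfolding is_dist_def by simp
  have P0: "\<And>x y. P x y \<ge> 0" using cP unfolding is_channel_def is_dist_def by simp
  have Q0: "\<And>y z. Q y z \<ge> 0" using cQ unfolding is_channel_def is_dist_def by simp
  have P1: "\<And>x. (\<Sum>y\<in>UNIV. P x y) = 1" using cP unfolding is_channel_def is_dist_def by simp
  have rq: "\<And>z. r z = out_dist q Q z"
    unfolding r_def R_def q_def out_comp ..
  have pw: "p x * R x z * ln (R x z / r z) \<le> (\<Sum>y\<in>UNIV. p x * P x y * Q y z * ln (Q y z / r z))" for x z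
  proof -
    define a where "a y = p x * P x y * Q y z" for y
    define b where "b y = p x * P x y * r z" for y
    have r0: "r z \<ge> 0" unfolding r_def R_def out_dist_def comp_channel_def
      using p0 P0 Q0 by (simp add: sum_nonneg)
    have suma: "sum a UNIV = p x * R x z"
      unfolding a_def R_def comp_channel_def by (simp add: sum_distrib_left mult.assoc)
    have sumb: "sum b UNIV = p x * r z"
    proof -
      have "sum b UNIV = (p x * r z) * (\<Sum>y\<in>UNIV. P x y)"
        unfolding b_def by (subst sum_distrib_left, simp add: mult_ac)
      thus ?thesis using P1[of x] by simp
    qed
    have rpos: "r z \<ge> p x * P x y * Q y z" for y
    proof -
      have "R x z \<ge> P x y * Q y z" unfolding R_def comp_channel_def
        using member_le_sum[of y UNIV "\<lambda>u. P x u * Q u z"] P0 Q0 by simp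
      moreover have "r z \<ge> p x * R x z" unfolding r_def out_dist_def
        using member_le_sum[of x UNIV "\<lambda>u. p u * R u z"] p0 P0 Q0
        by (simp add: R_def comp_channel_def sum_nonneg)
      ultimately show ?thesis using p0[of x] by (smt (verit) mult_left_mono mult.assoc)
    qed
    have ab: "\<forall>y\<in>UNIV. a y > 0 \<longrightarrow> b y > 0"
    proof (intro ballI impI)
      fix y assume "a y > 0"
      hence "p x \<noteq> 0" "P x y \<noteq> 0" "Q y z \<noteq> 0" unfolding a_def by auto
      hence "p x > 0" "P x y > 0" "Q y z > 0" using p0[of x] P0[of x y] Q0[of y z] by linarith+
      moreover hence "r z > 0" using rpos[of y] `a y > 0` unfolding a_def by linarith
      ultimately show "b y > 0" unfolding b_def by simp
    qed
    have ls: "sum a UNIV * ln (sum a UNIV / sum b UNIV) \<le> (\<Sum>y\<in>UNIV. a y * ln (a y / b y))"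
    proof -
      have a0: "\<forall>i\<in>UNIV. 0 \<le> a i" unfolding a_def using p0 P0 Q0 by simp
      have b0: "\<forall>i\<in>UNIV. 0 \<le> b i" unfolding b_def using p0 P0 r0 by simp
      show ?thesis by (rule logsum[OF finite a0 b0 ab])
    qed
    have lhs: "sum a UNIV * ln (sum a UNIV / sum b UNIV) = p x * R x z * ln (R x z / r z)"
      unfolding suma sumb by (cases "p x = 0") simp_all
    have rhs: "a y * ln (a y / b y) = p x * P x y * Q y z * ln (Q y z / r z)" for y
    proof (cases "a y = 0")
      case True thus ?thesis unfolding a_def by simp
    next
      case False
      hence "p x \<noteq> 0" "P x y \<noteq> 0" unfolding a_def by auto
      hence "a y / b y = Q y z / r z" unfolding a_def b_def by (simp add: field_simps)
      thus ?thesis unfolding a_def by simp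
    qed
    show ?thesis using ls lhs rhs by simp
  qed
  have "mutual_info p R = (\<Sum>x\<in>UNIV. \<Sum>z\<in>UNIV. p x * R x z * ln (R x z / r z))"
    unfolding mi_alt r_def ..
  also have "\<dots> \<le> (\<Sum>x\<in>UNIV. \<Sum>z\<in>UNIV. \<Sum>y\<in>UNIV. p x * P x y * Q y z * ln (Q y z / r z))"
    by (intro sum_mono pw)
  also have "\<dots> = (\<Sum>y\<in>UNIV. \<Sum>z\<in>UNIV. \<Sum>x\<in>UNIV. p x * P x y * Q y z * ln (Q y z / r z))"
  proof -
    have "(\<Sum>x\<in>UNIV. \<Sum>z\<in>UNIV. \<Sum>y\<in>UNIV. p x * P x y * Q y z * ln (Q y z / r z))
        = (\<Sum>x\<in>UNIV. \<Sum>y\<in>UNIV. \<Sum>z\<in>UNIV. p x * P x y * Q y z * ln (Q y z / r z))"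
      by (intro sum.cong refl) (rule sum.swap)
    also have "\<dots> = (\<Sum>y\<in>UNIV. \<Sum>x\<in>UNIV. \<Sum>z\<in>UNIV. p x * P x y * Q y z * ln (Q y z / r z))"
      by (rule sum.swap)
    also have "\<dots> = (\<Sum>y\<in>UNIV. \<Sum>z\<in>UNIV. \<Sum>x\<in>UNIV. p x * P x y * Q y z * ln (Q y z / r z))"
      by (intro sum.cong refl) (rule sum.swap)
    finally show ?thesis .
  qed
  also have "\<dots> = (\<Sum>y\<in>UNIV. \<Sum>z\<in>UNIV. q y * Q y z * ln (Q y z / out_dist q Q z))"
    unfolding rq[symmetric] unfolding q_def out_dist_def
    by (intro sum.cong refl) (simp add: sum_distrib_right mult.assoc)
  also have "\<dots> = mutual_info q Q"
    unfolding mi_alt ..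
  finally show ?thesis unfolding R_def q_def .
qed

theorem theorem9:
  fixes p :: "'t \<Rightarrow> 'x::finite \<Rightarrow> real"
    and P :: "'l \<Rightarrow> 'x \<Rightarrow> 'y::finite \<Rightarrow> real"
    and Q :: "'m \<Rightarrow> 'y \<Rightarrow> 'z::finite \<Rightarrow> real"
    and Th :: "'t set" and La :: "'l set" and M :: "'m set"
  assumes "Th \<noteq> {}" and "La \<noteq> {}" and "M \<noteq> {}"
    and "\<forall>t\<in>Th. is_dist (p t)"
    and "\<forall>l\<in>La. is_channel (P l)"
    and "\<forall>m\<in>M. is_channel (Q m)"
  shows "(SUP (t, l, m) \<in> Th \<times> La \<times> M.
            ereal (mutual_info (p t) (comp_channel (P l) (Q m))))
         \<le> min (SUP (t, l) \<in> Th \<times> La. ereal (mutual_info (p t) (P l)))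
                 (SUP (t, l, m) \<in> Th \<times> La \<times> M.
                    ereal (mutual_info (out_dist (p t) (P l)) (Q m)))"
proof (rule SUP_least, clarify)
  fix t l m assume tlm: "t \<in> Th" "l \<in> La" "m \<in> M"
  have 1: "ereal (mutual_info (p t) (comp_channel (P l) (Q m)))
      \<le> (SUP (t, l) \<in> Th \<times> La. ereal (mutual_info (p t) (P l)))"
  proof -
    have "ereal (mutual_info (p t) (comp_channel (P l) (Q m))) \<le> ereal (mutual_info (p t) (P l))"
      using dpi1[of "p t" "P l" "Q m"] assms tlm by simp
    also have "\<dots> \<le> (SUP (t, l) \<in> Th \<times> La. ereal (mutual_info (p t) (P l)))"
      using SUP_upper[of "(t,l)" "Th \<times> La" "\<lambda>(t,l). ereal (mutual_info (p t) (P l))"] tlm by simp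
    finally show ?thesis .
  qed
  have 2: "ereal (mutual_info (p t) (comp_channel (P l) (Q m)))
      \<le> (SUP (t, l, m) \<in> Th \<times> La \<times> M. ereal (mutual_info (out_dist (p t) (P l)) (Q m)))"
  proof -
    have "ereal (mutual_info (p t) (comp_channel (P l) (Q m))) \<le> ereal (mutual_info (out_dist (p t) (P l)) (Q m))"
      using dpi2[of "p t" "P l" "Q m"] assms tlm by simp
    also have "\<dots> \<le> (SUP (t, l, m) \<in> Th \<times> La \<times> M. ereal (mutual_info (out_dist (p t) (P l)) (Q m)))"
      using SUP_upper[of "(t,l,m)" "Th \<times> La \<times> M" "\<lambda>(t,l,m). ereal (mutual_info (out_dist (p t) (P l)) (Q m))"] tlm by simp
    finally show ?thesis .
  qed
  show "ereal (mutual_info (p t) (comp_channel (P l) (Q m)))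
      \<le> min (SUP (t, l) \<in> Th \<times> La. ereal (mutual_info (p t) (P l)))
             (SUP (t, l, m) \<in> Th \<times> La \<times> M. ereal (mutual_info (out_dist (p t) (P l)) (Q m)))"
    using 1 2 by simp
qed

end
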